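(* Let $G'=(V',E')$ be a graph and let $G=(V,E)$ be a vertex-induced subgraph of $G'$ such that: (i) every $v\in V'\setminus V$ has $\deg(v)<n$ in $G'$; (ii) $\operatorname{col}_{ve}(G)=n$; and (iii) in the vertex-edge marking game on $G$, Alice has a strategy which, at the end of each of her turns, leaves no unmarked vertex incident to $n-1$ marked edges. Then $\operatorname{col}_{ve}(G')=n$.
   Context: The vertex-edge marking game on a graph $G=(V,E)$ (finite or infinite) is played by Alice, who marks vertices, and Bob, who marks edges. Initially nothing is marked. The game proceeds in rounds $r=1,2,\dots$; in each round Alice first marks one unmarked vertex, then Bob marks one unmarked edge. For a finite graph the game ends when either player has no move; for an infinite graph it continues forever. After round $r$, the vertex score of $v$ is $0$ if $v$ is marked, and otherwise the number of marked edges incident to $v$. The $r$-round score is the supremum over $v\in V$ of the vertex scores after round $r$, and the final score of the game is the supremum of the $r$-round scores over all rounds. Bob has a winning strategy for score $s$ if, whatever Alice plays, Bob can force the final score to be at least $s$. The vertex-edge coloring number is $\operatorname{col}_{ve}(G)=\sup\{s : \text{Bob has a winning strategy for score } s\}+1$. *)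

theory Defs
  imports Main "HOL-Library.Extended_Nat"
begin

definition graph :: "'a set \<Rightarrow> 'a set set \<Rightarrow> bool" where
  "graph V E \<longleftrightarrow> (\<forall>e\<in>E. \<exists>u w. u \<noteq> w \<and> u \<in> V \<and> w \<in> V \<and> e = {u, w})"

definition induced_subgraph :: "'a set \<Rightarrow> 'a set set \<Rightarrow> 'a set \<Rightarrow> 'a set set \<Rightarrow> bool" where
  "induced_subgraph V E V' E' \<longleftrightarrow> V \<subseteq> V' \<and> E = {e \<in> E'. e \<subseteq> V}"

definition degree :: "'a set set \<Rightarrow> 'a \<Rightarrow> enat" where
  "degree E v = (if finite {e \<in> E. v \<in> e} then enat (card {e \<in> E. v \<in> e}) else \<infinity>)"

(* A history of the game: list of moves, Inl v = Alice marks vertex v,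
   Inr e = Bob marks edge e. *)
type_synonym 'a hist = "('a + 'a set) list"

definition MV :: "'a hist \<Rightarrow> 'a set" where
  "MV h = {v. Inl v \<in> set h}"

definition ME :: "'a hist \<Rightarrow> 'a set set" where
  "ME h = {e. Inr e \<in> set h}"

definition vscore :: "'a hist \<Rightarrow> 'a \<Rightarrow> nat" where
  "vscore h v = (if v \<in> MV h then 0 else card {e \<in> ME h. v \<in> e})"

definition pscore :: "'a set \<Rightarrow> 'a hist \<Rightarrow> enat" where
  "pscore V h = (SUP v\<in>V. enat (vscore h v))"

definition alice_strategy :: "'a set \<Rightarrow> ('a hist \<Rightarrow> 'a) \<Rightarrow> bool" where
  "alice_strategy V \<sigma> \<longleftrightarrow> (\<forall>h. V - MV h \<noteq> {} \<longrightarrow> \<sigma> h \<in> V - MV h)"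

definition bob_strategy :: "'a set set \<Rightarrow> ('a hist \<Rightarrow> 'a set) \<Rightarrow> bool" where
  "bob_strategy E \<tau> \<longleftrightarrow> (\<forall>h. E - ME h \<noteq> {} \<longrightarrow> \<tau> h \<in> E - ME h)"

(* the game has ended in position h: the player to move has no legal move
   (Alice moves when the history has even length, Bob when odd) *)
definition ended :: "'a set \<Rightarrow> 'a set set \<Rightarrow> 'a hist \<Rightarrow> bool" where
  "ended V E h \<longleftrightarrow> (if even (length h) then V - MV h = {} else E - ME h = {})"

primrec play :: "'a set \<Rightarrow> 'a set set \<Rightarrow> ('a hist \<Rightarrow> 'a) \<Rightarrow> ('a hist \<Rightarrow> 'a set) \<Rightarrow> nat \<Rightarrow> 'a hist" where
  "play V E \<sigma> \<tau> 0 = []"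
| "play V E \<sigma> \<tau> (Suc t) =
     (let h = play V E \<sigma> \<tau> t in
      if ended V E h then h
      else h @ [if even (length h) then Inl (\<sigma> h) else Inr (\<tau> h)])"

(* final score: supremum over rounds r of the r-round score, the position
   after round r being the position after 2r half-moves *)
definition final_score :: "'a set \<Rightarrow> 'a set set \<Rightarrow> ('a hist \<Rightarrow> 'a) \<Rightarrow> ('a hist \<Rightarrow> 'a set) \<Rightarrow> enat" where
  "final_score V E \<sigma> \<tau> = (SUP r. pscore V (play V E \<sigma> \<tau> (2 * r)))"

definition bob_wins :: "'a set \<Rightarrow> 'a set set \<Rightarrow> nat \<Rightarrow> bool" where
  "bob_wins V E s \<longleftrightarrow> (\<exists>\<tau>. bob_strategy E \<tau> \<and>
      (\<forall>\<sigma>. alice_strategy V \<sigma> \<longrightarrow> enat s \<le> final_score V E \<sigma> \<tau>))"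

definition col_ve :: "'a set \<Rightarrow> 'a set set \<Rightarrow> enat" where
  "col_ve V E = Sup {enat s | s. bob_wins V E s} + 1"

(* Alice has a strategy which, at the end of each of her turns, leaves no unmarked
   vertex incident to k marked edges (positions right after Alice's moves are those
   of odd length) *)
definition alice_avoids :: "'a set \<Rightarrow> 'a set set \<Rightarrow> nat \<Rightarrow> bool" where
  "alice_avoids V E k \<longleftrightarrow> (\<exists>\<sigma>. alice_strategy V \<sigma> \<and>
     (\<forall>\<tau>. bob_strategy E \<tau> \<longrightarrow> (\<forall>t. odd (length (play V E \<sigma> \<tau> t)) \<longrightarrow>
        (\<forall>v \<in> V - MV (play V E \<sigma> \<tau> t).
            card {e \<in> ME (play V E \<sigma> \<tau> t). v \<in> e} \<noteq> k))))"

end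

theory Submission
  imports Defs "HOL-Library.Sublist"
begin


lemma MV_simps[simp]: "MV [] = {}" "MV (h @ [Inl v]) = insert v (MV h)" "MV (h @ [Inr e]) = MV h"
  by (auto simp: MV_def)
lemma ME_simps[simp]: "ME [] = {}" "ME (h @ [Inr e]) = insert e (ME h)" "ME (h @ [Inl v]) = ME h"
  by (auto simp: ME_def)

lemma finite_ME[simp]: "finite (ME h)"
proof -
  have "ME h = Inr -` set h" by (auto simp: ME_def)
  then show ?thesis by (simp add: finite_vimageI)
qed

lemma card_insert_filter: "finite A \<Longrightarrow> card {x \<in> insert e A. P x} \<le> Suc (card {x \<in> A. P x})"
proof -
  assume f: "finite A"
  have "{x \<in> insert e A. P x} \<subseteq> insert e {x \<in> A. P x}" by auto
  then have "card {x \<in> insert e A. P x} \<le> card (insert e {x \<in> A. P x})"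
    by (intro card_mono) (use f in auto)
  also have "\<dots> \<le> Suc (card {x \<in> A. P x})" by (simp add: card_insert_if f)
  finally show ?thesis .
qed

lemma vscore_Inr_mono: "vscore h v \<le> vscore (h @ [Inr e]) v"
  unfolding vscore_def by (auto intro!: card_mono)

lemma vscore_Inr_le: "vscore (h @ [Inr e]) v \<le> Suc (vscore h v)"
  unfolding vscore_def using card_insert_filter[of "ME h" e "\<lambda>x. v \<in> x"] by auto

lemma vscore_Inl_le: "vscore (h @ [Inl x]) v \<le> vscore h v"
  unfolding vscore_def by auto

lemma play_Suc_cases:
  "play V E \<sigma> \<tau> (Suc t) = play V E \<sigma> \<tau> t \<or>
   (\<not> ended V E (play V E \<sigma> \<tau> t) \<and> play V E \<sigma> \<tau> (Suc t) = play V E \<sigma> \<tau> t @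
     [if even (length (play V E \<sigma> \<tau> t)) then Inl (\<sigma> (play V E \<sigma> \<tau> t)) else Inr (\<tau> (play V E \<sigma> \<tau> t))])"
  by (simp add: Let_def)

lemma play_ended: "ended V E (play V E \<sigma> \<tau> t) \<Longrightarrow> play V E \<sigma> \<tau> (Suc t) = play V E \<sigma> \<tau> t"
  by (simp add: Let_def)

lemma play_len: "length (play V E \<sigma> \<tau> t) = t \<or> ended V E (play V E \<sigma> \<tau> t)"
proof (induction t)
  case 0 then show ?case by simp
next
  case (Suc t)
  show ?case
  proof (cases "ended V E (play V E \<sigma> \<tau> t)")
    case True then show ?thesis by (simp add: play_ended)
  next
    case False
    with Suc have "length (play V E \<sigma> \<tau> t) = t" by auto
    with False show ?thesis by (simp add: Let_def)
  qed
qed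

lemma pscore_Inr_mono: "pscore W h \<le> pscore W (h @ [Inr e])"
  unfolding pscore_def by (rule SUP_subset_mono[OF order_refl]) (simp add: vscore_Inr_mono)

lemma pscore_play_even: "\<exists>r. pscore W (play V E \<sigma> \<tau> t) \<le> pscore W (play V E \<sigma> \<tau> (2 * r))"
proof (cases "even t")
  case True
  then show ?thesis by (intro exI[of _ "t div 2"]) simp
next
  case False
  have "pscore W (play V E \<sigma> \<tau> t) \<le> pscore W (play V E \<sigma> \<tau> (Suc t))"
  proof (cases "play V E \<sigma> \<tau> (Suc t) = play V E \<sigma> \<tau> t")
    case True then show ?thesis by simp
  next
    case F2: False
    then have ne: "\<not> ended V E (play V E \<sigma> \<tau> t)" using play_ended by metis
    then have "length (play V E \<sigma> \<tau> t) = t" using play_len by metis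
    with ne False show ?thesis by (simp add: Let_def pscore_Inr_mono)
  qed
  moreover have "Suc t = 2 * (Suc t div 2)" using False by simp
  ultimately show ?thesis by metis
qed

inductive legal :: "'a set \<Rightarrow> 'a set set \<Rightarrow> 'a hist \<Rightarrow> bool" for V E where
  "legal V E []"
| "legal V E J \<Longrightarrow> even (length J) \<Longrightarrow> v \<in> V - MV J \<Longrightarrow> legal V E (J @ [Inl v])"
| "legal V E J \<Longrightarrow> odd (length J) \<Longrightarrow> e \<in> E - ME J \<Longrightarrow> legal V E (J @ [Inr e])"

lemma legal_snoc: "legal V E (J @ [m]) \<longleftrightarrow> legal V E J \<and>
   (case m of Inl v \<Rightarrow> even (length J) \<and> v \<in> V - MV J | Inr e \<Rightarrow> odd (length J) \<and> e \<in> E - ME J)"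
proof
  assume "legal V E (J @ [m])"
  then show "legal V E J \<and>
   (case m of Inl v \<Rightarrow> even (length J) \<and> v \<in> V - MV J | Inr e \<Rightarrow> odd (length J) \<and> e \<in> E - ME J)"
    by (cases rule: legal.cases) auto
next
  assume "legal V E J \<and>
   (case m of Inl v \<Rightarrow> even (length J) \<and> v \<in> V - MV J | Inr e \<Rightarrow> odd (length J) \<and> e \<in> E - ME J)"
  then show "legal V E (J @ [m])" by (cases m) (auto intro: legal.intros)
qed

lemma legal_prefix: "legal V E J \<Longrightarrow> prefix K J \<Longrightarrow> legal V E K"
proof (induction J rule: rev_induct)
  case Nil then show ?case by simp
next
  case (snoc x xs)
  then show ?case by (auto simp: legal_snoc)
qed

definition folA :: "('a hist \<Rightarrow> 'a) \<Rightarrow> 'a hist \<Rightarrow> bool" where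
  "folA \<sigma> J \<longleftrightarrow> (\<forall>K v. prefix (K @ [Inl v]) J \<longrightarrow> \<sigma> K = v)"
definition folB :: "('a hist \<Rightarrow> 'a set) \<Rightarrow> 'a hist \<Rightarrow> bool" where
  "folB \<tau> J \<longleftrightarrow> (\<forall>K e. prefix (K @ [Inr e]) J \<longrightarrow> \<tau> K = e)"

lemma folA_prefix: "folA \<sigma> J \<Longrightarrow> prefix K J \<Longrightarrow> folA \<sigma> K"
  unfolding folA_def by (meson prefix_order.trans)
lemma folB_prefix: "folB \<sigma> J \<Longrightarrow> prefix K J \<Longrightarrow> folB \<sigma> K"
  unfolding folB_def by (meson prefix_order.trans)

lemma play_eq: "legal V E J \<Longrightarrow> folA \<sigma> J \<Longrightarrow> folB \<tau> J \<Longrightarrow> play V E \<sigma> \<tau> (length J) = J"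
proof (induction J rule: rev_induct)
  case Nil then show ?case by simp
next
  case (snoc m J)
  have pJ: "prefix J (J @ [m])" by simp
  have IH: "play V E \<sigma> \<tau> (length J) = J"
    using snoc folA_prefix[OF _ pJ] folB_prefix[OF _ pJ] by (auto simp: legal_snoc)
  show ?case
  proof (cases m)
    case (Inl v)
    with snoc.prems have "even (length J)" "v \<in> V - MV J" "\<sigma> J = v"
      by (auto simp: legal_snoc folA_def)
    then show ?thesis using IH Inl by (auto simp: Let_def ended_def)
  next
    case (Inr e)
    with snoc.prems have "odd (length J)" "e \<in> E - ME J" "\<tau> J = e"
      by (auto simp: legal_snoc folB_def)
    then show ?thesis using IH Inr by (auto simp: Let_def ended_def)
  qed
qed

lemma folA_snocA: "folA \<sigma> I \<Longrightarrow> folA \<sigma> (I @ [Inl (\<sigma> I)])"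
  unfolding folA_def by auto
lemma folA_snocB: "folA \<sigma> I \<Longrightarrow> folA \<sigma> (I @ [Inr e])"
  unfolding folA_def by auto
lemma folB_snocB: "folB \<tau> I \<Longrightarrow> folB \<tau> (I @ [Inr (\<tau> I)])"
  unfolding folB_def by auto
lemma folB_snocA: "folB \<tau> I \<Longrightarrow> folB \<tau> (I @ [Inl v])"
  unfolding folB_def by auto

definition chA :: "(nat \<Rightarrow> 'a hist) \<Rightarrow> 'a set \<Rightarrow> 'a hist \<Rightarrow> 'a" where
  "chA Q V J = (if \<exists>t v. prefix (J @ [Inl v]) (Q t) then (SOME v. \<exists>t. prefix (J @ [Inl v]) (Q t))
     else (SOME v. v \<in> V - MV J))"
definition chB :: "(nat \<Rightarrow> 'a hist) \<Rightarrow> 'a set set \<Rightarrow> 'a hist \<Rightarrow> 'a set" where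
  "chB Q E J = (if \<exists>t e. prefix (J @ [Inr e]) (Q t) then (SOME e. \<exists>t. prefix (J @ [Inr e]) (Q t))
     else (SOME e. e \<in> E - ME J))"

lemma chain_mono: "(\<And>t. prefix (Q t) (Q (Suc t))) \<Longrightarrow> t \<le> t' \<Longrightarrow> prefix (Q t) (Q t')"
proof (induction t')
  case 0 then show ?case by simp
next
  case (Suc t')
  then show ?case by (metis le_Suc_eq prefix_order.trans prefix_order.refl)
qed

lemma chain_unique:
  assumes ch: "\<And>t. prefix (Q t) (Q (Suc t))"
    and a: "prefix (J @ [x]) (Q t1)" and b: "prefix (J @ [y]) (Q t2)"
  shows "x = y"
proof -
  have "\<exists>L. prefix (J @ [x]) L \<and> prefix (J @ [y]) L"
  proof (cases "t1 \<le> t2")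
    case True
    then show ?thesis using a b chain_mono[of Q, OF ch True] by (meson prefix_order.trans)
  next
    case False
    then show ?thesis using a b chain_mono[of Q, OF ch, of t2 t1] by (meson prefix_order.trans nat_le_linear)
  qed
  then obtain L where "prefix (J @ [x]) L" "prefix (J @ [y]) L" by blast
  then have "prefix (J @ [x]) (J @ [y]) \<or> prefix (J @ [y]) (J @ [x])"
    using prefix_same_cases by blast
  then show ?thesis by auto
qed

lemma chA_eq:
  assumes ch: "\<And>t. prefix (Q t) (Q (Suc t))" and p: "prefix (J @ [Inl v]) (Q t)"
  shows "chA Q V J = v"
proof -
  have ex: "\<exists>v t. prefix (J @ [Inl v]) (Q t)" using p by blast
  then have "\<exists>t. prefix (J @ [Inl (SOME v. \<exists>t. prefix (J @ [Inl v]) (Q t))]) (Q t)"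
    by (rule someI_ex)
  then have "\<exists>t. prefix (J @ [Inl (chA Q V J)]) (Q t)"
    unfolding chA_def using ex by (simp, blast)
  then obtain t' where "prefix (J @ [Inl (chA Q V J)]) (Q t')" by blast
  from chain_unique[OF ch this p] show ?thesis by simp
qed

lemma chB_eq:
  assumes ch: "\<And>t. prefix (Q t) (Q (Suc t))" and p: "prefix (J @ [Inr e]) (Q t)"
  shows "chB Q E J = e"
proof -
  have ex: "\<exists>e t. prefix (J @ [Inr e]) (Q t)" using p by blast
  then have "\<exists>t. prefix (J @ [Inr (SOME e. \<exists>t. prefix (J @ [Inr e]) (Q t))]) (Q t)"
    by (rule someI_ex)
  then have "\<exists>t. prefix (J @ [Inr (chB Q E J)]) (Q t)"
    unfolding chB_def using ex by (simp, blast)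
  then obtain t' where "prefix (J @ [Inr (chB Q E J)]) (Q t')" by blast
  from chain_unique[OF ch this p] show ?thesis by simp
qed

lemma chA_strat:
  assumes ch: "\<And>t. prefix (Q t) (Q (Suc t))" and lg: "\<And>t. legal V E (Q t)"
  shows "alice_strategy V (chA Q V)"
  unfolding alice_strategy_def
proof (intro allI impI)
  fix h assume ne: "V - MV h \<noteq> {}"
  show "chA Q V h \<in> V - MV h"
  proof (cases "\<exists>t v. prefix (h @ [Inl v]) (Q t)")
    case True
    then obtain t v where p: "prefix (h @ [Inl v]) (Q t)" by blast
    then have "chA Q V h = v" by (rule chA_eq[of Q, OF ch])
    moreover have "legal V E (h @ [Inl v])" using legal_prefix[OF lg p] .
    ultimately show ?thesis by (simp add: legal_snoc)
  next
    case False
    then have "chA Q V h = (SOME v. v \<in> V - MV h)" unfolding chA_def by simp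
    then show ?thesis using ne by (metis some_in_eq)
  qed
qed

lemma chB_strat:
  assumes ch: "\<And>t. prefix (Q t) (Q (Suc t))" and lg: "\<And>t. legal V E (Q t)"
  shows "bob_strategy E (chB Q E)"
  unfolding bob_strategy_def
proof (intro allI impI)
  fix h assume ne: "E - ME h \<noteq> {}"
  show "chB Q E h \<in> E - ME h"
  proof (cases "\<exists>t e. prefix (h @ [Inr e]) (Q t)")
    case True
    then obtain t e where p: "prefix (h @ [Inr e]) (Q t)" by blast
    then have "chB Q E h = e" by (rule chB_eq[of Q, OF ch])
    moreover have "legal V E (h @ [Inr e])" using legal_prefix[OF lg p] .
    ultimately show ?thesis by (simp add: legal_snoc)
  next
    case False
    then have "chB Q E h = (SOME v. v \<in> E - ME h)" unfolding chB_def by simp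
    then show ?thesis using ne by (metis some_in_eq)
  qed
qed

lemma chA_fol: "(\<And>t. prefix (Q t) (Q (Suc t))) \<Longrightarrow> folA (chA Q V) (Q t)"
  unfolding folA_def using chA_eq[of Q] by blast
lemma chB_fol: "(\<And>t. prefix (Q t) (Q (Suc t))) \<Longrightarrow> folB (chB Q E) (Q t)"
  unfolding folB_def using chB_eq[of Q] by blast

lemma play_chain:
  assumes Q0: "Q 0 = []"
    and leg: "\<And>t. legal V E (Q t)" and fA: "\<And>t. folA \<sigma> (Q t)" and fB: "\<And>t. folB \<tau> (Q t)"
    and prog: "\<And>t. \<not> ended V E (Q t) \<Longrightarrow> \<exists>x. Q (Suc t) = Q t @ [x]"
  shows "\<exists>t. play V E \<sigma> \<tau> s = Q t"
proof (induction s)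
  case 0 then show ?case using Q0 by (metis play.simps(1))
next
  case (Suc s)
  then obtain t where pt: "play V E \<sigma> \<tau> s = Q t" by blast
  show ?case
  proof (cases "ended V E (Q t)")
    case True then show ?thesis using pt play_ended by metis
  next
    case False
    then obtain x where x: "Q (Suc t) = Q t @ [x]" using prog by blast
    have "length (Q t) = s" using play_len[of V E \<sigma> \<tau> s] pt False by auto
    then have "length (Q (Suc t)) = Suc s" using x by simp
    moreover have "play V E \<sigma> \<tau> (length (Q (Suc t))) = Q (Suc t)"
      using play_eq leg fA fB by blast
    ultimately show ?thesis by metis
  qed
qed

lemma bound_lemma:
  assumes "legal V E J"
    and "\<And>K. prefix K J \<Longrightarrow> odd (length K) \<Longrightarrow> \<forall>v\<in>V - MV K. card {e \<in> ME K. v \<in> e} \<noteq> n - 1"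
    and "v \<in> V - MV J"
  shows "if odd (length J) then card {e \<in> ME J. v \<in> e} + 2 \<le> n else card {e \<in> ME J. v \<in> e} \<le> n - 1"
  using assms
proof (induction J arbitrary: v rule: rev_induct)
  case Nil then show ?case by simp
next
  case (snoc m J)
  have lJ: "legal V E J" using snoc.prems by (simp add: legal_snoc)
  have gJ: "\<And>K. prefix K J \<Longrightarrow> odd (length K) \<Longrightarrow> \<forall>v\<in>V - MV K. card {e \<in> ME K. v \<in> e} \<noteq> n - 1"
    using snoc.prems(2) by auto
  show ?case
  proof (cases m)
    case (Inl x)
    with snoc.prems have ev: "even (length J)" by (simp add: legal_snoc)
    have vJ: "v \<in> V - MV J" using snoc.prems Inl by auto
    have "card {e \<in> ME J. v \<in> e} \<le> n - 1" using snoc.IH[OF lJ gJ vJ] ev by simp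
    moreover have "card {e \<in> ME J. v \<in> e} \<noteq> n - 1"
      using snoc.prems(2)[of "J @ [m]"] snoc.prems(3) ev Inl by auto
    ultimately show ?thesis using ev Inl by simp
  next
    case (Inr e)
    with snoc.prems have od: "odd (length J)" by (simp add: legal_snoc)
    have vJ: "v \<in> V - MV J" using snoc.prems Inr by auto
    have "card {e \<in> ME J. v \<in> e} + 2 \<le> n" using snoc.IH[OF lJ gJ vJ] od by simp
    moreover have "card {x \<in> insert e (ME J). v \<in> x} \<le> Suc (card {x \<in> ME J. v \<in> x})"
      by (rule card_insert_filter) simp
    ultimately show ?thesis using od Inr by simp
  qed
qed

lemma sup_ge_enat:
  assumes "enat s \<le> (SUP x\<in>A. f x)" and "0 < s"
  shows "\<exists>x\<in>A. enat s \<le> f x"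
proof (rule ccontr)
  assume "\<not> ?thesis"
  then have "\<forall>x\<in>A. f x \<le> enat (s - 1)"
    by (metis Suc_pred' assms(2) eSuc_enat ileI1 linorder_not_le)
  then have "(SUP x\<in>A. f x) \<le> enat (s - 1)" by (simp add: SUP_least)
  with assms show False by (meson diff_less enat_ord_simps(2) less_one linorder_not_le order_trans)
qed



locale upper =
  fixes V E V' E' and \<sigma> :: "'a hist \<Rightarrow> 'a" and \<tau>' :: "'a hist \<Rightarrow> 'a set" and n :: nat
  assumes gr: "graph V' E'" and ind: "induced_subgraph V E V' E'"
    and deg: "\<forall>v\<in>V' - V. degree E' v < enat n"
    and sA: "alice_strategy V \<sigma>"
    and av: "\<forall>\<tau>. bob_strategy E \<tau> \<longrightarrow> (\<forall>t. odd (length (play V E \<sigma> \<tau> t)) \<longrightarrow>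
        (\<forall>v \<in> V - MV (play V E \<sigma> \<tau> t). card {e \<in> ME (play V E \<sigma> \<tau> t). v \<in> e} \<noteq> n - 1))"
    and sB: "bob_strategy E' \<tau>'"
begin

definition stepU :: "'a hist \<Rightarrow> 'a + 'a set \<Rightarrow> 'a hist" where
  "stepU I m = (case m of Inl y \<Rightarrow> if even (length I) \<and> V - MV I \<noteq> {} then I @ [Inl (\<sigma> I)] else I
     | Inr e \<Rightarrow> if odd (length I) \<and> e \<in> E - ME I then I @ [Inr e] else I)"

definition trU :: "'a hist \<Rightarrow> 'a hist" where "trU h = foldl stepU [] h"

definition viol :: "'a hist \<Rightarrow> 'a set" where
  "viol h = {u \<in> V - MV h. \<exists>e\<in>ME h. u \<in> e \<and> e \<notin> E}"

definition sA' :: "'a hist \<Rightarrow> 'a" where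
  "sA' h = (let I = trU h in if even (length I) \<and> V - MV I \<noteq> {} \<and> \<sigma> I \<notin> MV h then \<sigma> I
     else if viol h \<noteq> {} then (SOME u. u \<in> viol h) else (SOME v. v \<in> V' - MV h))"

definition P :: "nat \<Rightarrow> 'a hist" where "P t = play V' E' sA' \<tau>' t"
definition Q :: "nat \<Rightarrow> 'a hist" where "Q t = trU (P t)"

lemma VV': "V \<subseteq> V'" and EE: "E = {e \<in> E'. e \<subseteq> V}"
  using ind by (auto simp: induced_subgraph_def)

lemma trU_snoc[simp]: "trU (h @ [m]) = stepU (trU h) m"
  by (simp add: trU_def)

lemma sA'_strat: "alice_strategy V' sA'"
  unfolding alice_strategy_def
proof (intro allI impI)
  fix h assume ne: "V' - MV h \<noteq> {}"
  define I where "I = trU h"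
  show "sA' h \<in> V' - MV h"
  proof (cases "even (length I) \<and> V - MV I \<noteq> {} \<and> \<sigma> I \<notin> MV h")
    case True
    then have "\<sigma> I \<in> V" using sA unfolding alice_strategy_def by blast
    then show ?thesis using True VV' unfolding sA'_def I_def[symmetric] Let_def by auto
  next
    case nb: False
    show ?thesis
    proof (cases "viol h \<noteq> {}")
      case True
      then have "(SOME u. u \<in> viol h) \<in> viol h" by (metis some_in_eq)
      then show ?thesis using nb True VV' unfolding sA'_def I_def[symmetric] Let_def viol_def by auto
    next
      case F2: False
      then have "sA' h = (SOME v. v \<in> V' - MV h)" using nb F2 unfolding sA'_def I_def[symmetric] Let_def by auto
      then show ?thesis using ne by (metis some_in_eq)
    qed
  qed
qed

lemma viol_sub: "e \<in> E' \<Longrightarrow> \<exists>a. viol (h @ [Inr e]) \<subseteq> {a} \<union> viol h"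
proof -
  assume "e \<in> E'"
  then obtain a b where ab: "a \<noteq> b" "a \<in> V'" "b \<in> V'" "e = {a, b}" using gr unfolding graph_def by blast
  show ?thesis
  proof (cases "e \<in> E")
    case True
    then show ?thesis unfolding viol_def by auto
  next
    case False
    then have "a \<notin> V \<or> b \<notin> V" using EE \<open>e \<in> E'\<close> ab by auto
    then show ?thesis
    proof
      assume "a \<notin> V" then show ?thesis using ab unfolding viol_def by (intro exI[of _ b]) auto
    next
      assume "b \<notin> V" then show ?thesis using ab unfolding viol_def by (intro exI[of _ a]) auto
    qed
  qed
qed

lemma viol_Inl: "viol (h @ [Inl x]) = viol h - {x}"
  unfolding viol_def by auto
lemma viol_Inr_E: "e \<in> E \<Longrightarrow> viol (h @ [Inr e]) = viol h"
  unfolding viol_def by auto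

lemma stepU_cases: "stepU I m = I \<or> (\<exists>x. stepU I m = I @ [x])"
  unfolding stepU_def by (auto split: sum.split)

definition INV :: "'a hist \<Rightarrow> 'a hist \<Rightarrow> bool" where
  "INV h I \<longleftrightarrow> legal V E I \<and> folA \<sigma> I \<and> ME I \<subseteq> ME h \<inter> E \<and> (V - MV I \<noteq> {} \<longrightarrow> ME I = ME h \<inter> E)
    \<and> MV I \<subseteq> MV h \<and> ME h \<subseteq> E'
    \<and> (odd (length h) \<longrightarrow> (odd (length I) \<or> V \<subseteq> MV I) \<and> viol h = {})
    \<and> (even (length h) \<longrightarrow> (\<exists>a. viol h \<subseteq> {a}) \<and> (viol h \<noteq> {} \<longrightarrow> odd (length I)))"

lemma INV0: "INV [] []"
  unfolding INV_def viol_def folA_def by (auto intro: legal.intros)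

lemma inv_A:
  assumes inv: "INV h I" and I: "I = trU h" and ev: "even (length h)" and ne: "V' - MV h \<noteq> {}"
  shows "INV (h @ [Inl (sA' h)]) (stepU I (Inl (sA' h)))"
proof -
  define x where "x = sA' h"
  have x: "x \<in> V' - MV h" using sA'_strat ne unfolding alice_strategy_def x_def by blast
  from inv have lg: "legal V E I" and fA: "folA \<sigma> I" and me1: "ME I \<subseteq> ME h \<inter> E"
    and me2: "V - MV I \<noteq> {} \<longrightarrow> ME I = ME h \<inter> E" and mv: "MV I \<subseteq> MV h" and meE: "ME h \<subseteq> E'"
    and va: "\<exists>a. viol h \<subseteq> {a}" and vo: "viol h \<noteq> {} \<longrightarrow> odd (length I)"
    using ev unfolding INV_def by auto
  have odd': "odd (length (h @ [Inl x]))" using ev by simp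
  show ?thesis
  proof (cases "even (length I) \<and> V - MV I \<noteq> {}")
    case c1: True
    then have st: "stepU I (Inl x) = I @ [Inl (\<sigma> I)]" unfolding stepU_def by simp
    have sI: "\<sigma> I \<in> V - MV I" using sA c1 unfolding alice_strategy_def by blast
    have vh: "viol h = {}" using vo c1 by auto
    have "\<sigma> I \<in> MV h \<or> x = \<sigma> I" unfolding x_def sA'_def I[symmetric] Let_def using c1 by auto
    then have mv': "MV (I @ [Inl (\<sigma> I)]) \<subseteq> MV (h @ [Inl x])" using mv by auto
    show ?thesis unfolding x_def[symmetric] st INV_def
      using lg fA me1 me2 mv' meE vh c1 sI odd'
      by (auto simp: legal_snoc folA_snocA viol_Inl)
  next
    case c2: False
    then have st: "stepU I (Inl x) = I" unfolding stepU_def by auto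
    have "viol (h @ [Inl x]) = {}"
    proof (cases "viol h = {}")
      case True then show ?thesis by (simp add: viol_Inl)
    next
      case False
      then have oI: "odd (length I)" using vo by auto
      then have "x = (SOME u. u \<in> viol h)" unfolding x_def sA'_def I[symmetric] Let_def using False by auto
      then have "x \<in> viol h" using False by (metis some_in_eq)
      then show ?thesis using va by (auto simp: viol_Inl)
    qed
    then show ?thesis unfolding x_def[symmetric] st INV_def
      using lg fA me1 me2 mv meE c2 odd' by auto
  qed
qed

lemma inv_B:
  assumes inv: "INV h I" and od: "odd (length h)" and e: "e \<in> E' - ME h"
  shows "INV (h @ [Inr e]) (stepU I (Inr e))"
proof -
  from inv have lg: "legal V E I" and fA: "folA \<sigma> I" and me1: "ME I \<subseteq> ME h \<inter> E"
    and me2: "V - MV I \<noteq> {} \<longrightarrow> ME I = ME h \<inter> E" and mv: "MV I \<subseteq> MV h" and meE: "ME h \<subseteq> E'"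
    and oi: "odd (length I) \<or> V \<subseteq> MV I" and vh: "viol h = {}"
    using od unfolding INV_def by auto
  have ev': "even (length (h @ [Inr e]))" using od by simp
  obtain a where va: "viol (h @ [Inr e]) \<subseteq> {a}" using viol_sub[of e h] e vh by auto
  show ?thesis
  proof (cases "odd (length I) \<and> e \<in> E - ME I")
    case c1: True
    then have st: "stepU I (Inr e) = I @ [Inr e]" unfolding stepU_def by simp
    have "viol (h @ [Inr e]) = {}" using c1 vh viol_Inr_E by auto
    then show ?thesis unfolding st INV_def
      using lg fA me1 me2 mv meE c1 e ev' by (auto simp: legal_snoc folA_snocB)
  next
    case c2: False
    then have st: "stepU I (Inr e) = I" unfolding stepU_def by auto
    have me2': "ME I = ME (h @ [Inr e]) \<inter> E" if "V - MV I \<noteq> {}"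
    proof -
      have "odd (length I)" using oi that by auto
      then have "e \<notin> E" using c2 me1 e by auto
      then show ?thesis using me2 that by auto
    qed
    have vo: "odd (length I)" if "viol (h @ [Inr e]) \<noteq> {}"
    proof -
      from that obtain u where "u \<in> viol (h @ [Inr e])" by blast
      then have "u \<in> V - MV h" unfolding viol_def by auto
      then show ?thesis using oi mv by auto
    qed
    show ?thesis unfolding st INV_def
      using lg fA me1 me2' mv meE e ev' va vo by auto
  qed
qed

lemma inv: "INV (P t) (Q t)"
proof (induction t)
  case 0 then show ?case by (simp add: P_def Q_def trU_def INV0)
next
  case (Suc t)
  have "P (Suc t) = P t \<or> (\<not> ended V' E' (P t) \<and> P (Suc t) = P t @
     [if even (length (P t)) then Inl (sA' (P t)) else Inr (\<tau>' (P t))])"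
    unfolding P_def by (rule play_Suc_cases)
  then show ?case
  proof
    assume "P (Suc t) = P t" then show ?thesis using Suc by (simp add: Q_def)
  next
    assume a: "\<not> ended V' E' (P t) \<and> P (Suc t) = P t @
     [if even (length (P t)) then Inl (sA' (P t)) else Inr (\<tau>' (P t))]"
    show ?thesis
    proof (cases "even (length (P t))")
      case True
      then have "V' - MV (P t) \<noteq> {}" using a unfolding ended_def by auto
      then show ?thesis using inv_A[OF Suc _ True] a True by (simp add: Q_def)
    next
      case False
      then have "E' - ME (P t) \<noteq> {}" using a unfolding ended_def by auto
      then have "\<tau>' (P t) \<in> E' - ME (P t)" using sB unfolding bob_strategy_def by blast
      then show ?thesis using inv_B[OF Suc _] a False by (simp add: Q_def)
    qed
  qed
qed


lemma chainQ: "prefix (Q t) (Q (Suc t))"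
proof -
  have "P (Suc t) = P t \<or> (\<exists>m. P (Suc t) = P t @ [m])"
    unfolding P_def using play_Suc_cases by metis
  then show ?thesis unfolding Q_def using stepU_cases by (metis prefix_order.refl prefix_snoc trU_snoc)
qed

lemma legQ: "legal V E (Q t)" and folQ: "folA \<sigma> (Q t)"
  using inv[of t] unfolding INV_def by auto

lemma good:
  assumes "prefix K (Q t)" "odd (length K)"
  shows "\<forall>v\<in>V - MV K. card {e \<in> ME K. v \<in> e} \<noteq> n - 1"
proof -
  have bs: "bob_strategy E (chB Q E)" using chB_strat[of Q, OF chainQ legQ] .
  have "legal V E K" using legal_prefix[OF legQ assms(1)] .
  moreover have "folA \<sigma> K" using folA_prefix[OF folQ assms(1)] .
  moreover have "folB (chB Q E) K" using folB_prefix[OF chB_fol[of Q, OF chainQ] assms(1)] .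
  ultimately have "play V E \<sigma> (chB Q E) (length K) = K" by (rule play_eq)
  then show ?thesis using av bs assms(2) by metis
qed

lemma odd_bound:
  assumes od: "odd (length (P t))" and v: "v \<in> V - MV (P t)"
  shows "card {e \<in> ME (P t). v \<in> e} + 2 \<le> n"
proof -
  from inv[of t] od have me2: "V - MV (Q t) \<noteq> {} \<longrightarrow> ME (Q t) = ME (P t) \<inter> E"
    and mv: "MV (Q t) \<subseteq> MV (P t)" and oi: "odd (length (Q t)) \<or> V \<subseteq> MV (Q t)"
    and vh: "viol (P t) = {}" unfolding INV_def by auto
  have vQ: "v \<in> V - MV (Q t)" using v mv by auto
  then have oQ: "odd (length (Q t))" using oi by auto
  have eq: "{e \<in> ME (P t). v \<in> e} = {e \<in> ME (Q t). v \<in> e}"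
    using vh v me2 vQ unfolding viol_def by auto
  have "if odd (length (Q t)) then card {e \<in> ME (Q t). v \<in> e} + 2 \<le> n
        else card {e \<in> ME (Q t). v \<in> e} \<le> n - 1"
    by (rule bound_lemma[OF legQ _ vQ]) (use good in blast)
  then show ?thesis using oQ eq by simp
qed

lemma out_bound:
  assumes v: "v \<in> V' - V"
  shows "card {e \<in> ME (P t). v \<in> e} \<le> n - 1"
proof -
  have meE: "ME (P t) \<subseteq> E'" using inv[of t] unfolding INV_def by auto
  have d: "degree E' v < enat n" using deg v by auto
  then have fin: "finite {e \<in> E'. v \<in> e}" and c: "card {e \<in> E'. v \<in> e} < n"
    unfolding degree_def by (auto split: if_splits)
  have "card {e \<in> ME (P t). v \<in> e} \<le> card {e \<in> E'. v \<in> e}"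
    using meE by (intro card_mono[OF fin]) auto
  then show ?thesis using c by simp
qed

lemma all_bound: "v \<in> V' \<Longrightarrow> vscore (P t) v \<le> n - 1"
proof (induction t)
  case 0 then show ?case by (simp add: P_def vscore_def)
next
  case (Suc t)
  have "P (Suc t) = P t \<or> (\<not> ended V' E' (P t) \<and> P (Suc t) = P t @
     [if even (length (P t)) then Inl (sA' (P t)) else Inr (\<tau>' (P t))])"
    unfolding P_def by (rule play_Suc_cases)
  then show ?case
  proof
    assume "P (Suc t) = P t" then show ?thesis using Suc by simp
  next
    assume a: "\<not> ended V' E' (P t) \<and> P (Suc t) = P t @
     [if even (length (P t)) then Inl (sA' (P t)) else Inr (\<tau>' (P t))]"
    show ?thesis
    proof (cases "even (length (P t))")
      case True
      then show ?thesis using a Suc vscore_Inl_le[of "P t" "sA' (P t)" v] by simp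
    next
      case False
      then have P': "P (Suc t) = P t @ [Inr (\<tau>' (P t))]" using a by simp
      show ?thesis
      proof (cases "v \<in> V")
        case True
        show ?thesis
        proof (cases "v \<in> MV (P t)")
          case True then show ?thesis using P' by (simp add: vscore_def)
        next
          case False
          then have "card {e \<in> ME (P t). v \<in> e} + 2 \<le> n" using odd_bound[of t v] \<open>v \<in> V\<close> \<open>odd (length (P t))\<close> by auto
          moreover have "vscore (P (Suc t)) v \<le> Suc (vscore (P t) v)" using P' vscore_Inr_le by metis
          ultimately show ?thesis using False by (simp add: vscore_def)
        qed
      next
        case False
        then have "card {e \<in> ME (P (Suc t)). v \<in> e} \<le> n - 1" using out_bound Suc.prems by blast
        then show ?thesis unfolding vscore_def by simp
      qed
    qed
  qed
qed

lemma final_bound: "final_score V' E' sA' \<tau>' \<le> enat (n - 1)"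
  unfolding final_score_def pscore_def
  by (intro SUP_least) (use all_bound[unfolded P_def] in auto)

end

lemma upper_thm:
  assumes "graph V' E'" "induced_subgraph V E V' E'" "\<forall>v\<in>V' - V. degree E' v < enat n"
    "alice_avoids V E (n - 1)" "1 \<le> n"
  shows "\<not> bob_wins V' E' n"
proof
  assume "bob_wins V' E' n"
  then obtain \<tau>' where b: "bob_strategy E' \<tau>'"
    and w: "\<forall>\<sigma>'. alice_strategy V' \<sigma>' \<longrightarrow> enat n \<le> final_score V' E' \<sigma>' \<tau>'"
    unfolding bob_wins_def by blast
  obtain \<sigma> where a: "alice_strategy V \<sigma>" and av: "\<forall>\<tau>. bob_strategy E \<tau> \<longrightarrow> (\<forall>t. odd (length (play V E \<sigma> \<tau> t)) \<longrightarrow>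
        (\<forall>v \<in> V - MV (play V E \<sigma> \<tau> t). card {e \<in> ME (play V E \<sigma> \<tau> t). v \<in> e} \<noteq> n - 1))"
    using assms(4) unfolding alice_avoids_def by blast
  interpret upper V E V' E' \<sigma> \<tau>' n
    using assms(1-3) a av b by unfold_locales auto
  have "enat n \<le> enat (n - 1)" using w sA'_strat final_bound order_trans by blast
  then show False using assms(5) by simp
qed



definition stepL :: "'a set \<Rightarrow> 'a set set \<Rightarrow> 'a hist \<Rightarrow> 'a + 'a set \<Rightarrow> 'a hist" where
  "stepL V E I m = (case m of Inl y \<Rightarrow> if even (length I) \<and> V - MV I \<noteq> {}
        then I @ [Inl (if y \<in> V - MV I then y else SOME v. v \<in> V - MV I)] else I
     | Inr e \<Rightarrow> if odd (length I) \<and> e \<in> E - ME I then I @ [Inr e] else I)"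

definition trL :: "'a set \<Rightarrow> 'a set set \<Rightarrow> 'a hist \<Rightarrow> 'a hist" where
  "trL V E h = foldl (stepL V E) [] h"

definition tB :: "'a set \<Rightarrow> 'a set set \<Rightarrow> 'a set set \<Rightarrow> ('a hist \<Rightarrow> 'a set) \<Rightarrow> 'a hist \<Rightarrow> 'a set" where
  "tB V E E' \<tau> h = (let I = trL V E h in if odd (length I) \<and> E - ME I \<noteq> {} \<and> \<tau> I \<notin> ME h then \<tau> I
      else SOME e. e \<in> E' - ME h)"

lemma trL_snoc[simp]: "trL V E (h @ [m]) = stepL V E (trL V E h) m"
  by (simp add: trL_def)

lemma stepL_cases: "stepL V E I m = I \<or> (\<exists>x. stepL V E I m = I @ [x])"
  unfolding stepL_def by (auto split: sum.split)

lemma stepL_ended: "ended V E I \<Longrightarrow> stepL V E I m = I"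
  unfolding stepL_def ended_def by (auto split: sum.split if_splits)

locale lower =
  fixes V E V' E' and \<tau> :: "'a hist \<Rightarrow> 'a set" and \<sigma>' :: "'a hist \<Rightarrow> 'a"
  assumes ind: "induced_subgraph V E V' E'"
    and sB: "bob_strategy E \<tau>"
    and sA: "alice_strategy V' \<sigma>'"
begin

lemma VV': "V \<subseteq> V'" and EE': "E \<subseteq> E'"
  using ind by (auto simp: induced_subgraph_def)

abbreviation "tB' \<equiv> tB V E E' \<tau>"

lemma tB_strat: "bob_strategy E' tB'"
  unfolding bob_strategy_def
proof (intro allI impI)
  fix h assume ne: "E' - ME h \<noteq> {}"
  define I where "I = trL V E h"
  show "tB' h \<in> E' - ME h"
  proof (cases "odd (length I) \<and> E - ME I \<noteq> {} \<and> \<tau> I \<notin> ME h")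
    case True
    then have "\<tau> I \<in> E" using sB unfolding bob_strategy_def by blast
    then show ?thesis using True EE' unfolding tB_def I_def[symmetric] Let_def by auto
  next
    case False
    then have "tB' h = (SOME e. e \<in> E' - ME h)" unfolding tB_def I_def[symmetric] Let_def by auto
    then show ?thesis using ne by (metis some_in_eq)
  qed
qed

definition P :: "nat \<Rightarrow> 'a hist" where "P t = play V' E' \<sigma>' tB' t"
definition Q :: "nat \<Rightarrow> 'a hist" where "Q t = trL V E (P t)"

definition INV :: "'a hist \<Rightarrow> 'a hist \<Rightarrow> bool" where
  "INV h I \<longleftrightarrow> legal V E I \<and> folB \<tau> I \<and> ME I \<subseteq> ME h \<and> length I \<le> length h
    \<and> (\<not> ended V E I \<longrightarrow> length I = length h)
    \<and> (length I = length h \<longrightarrow> ME h = ME I \<and> MV h \<inter> V \<subseteq> MV I)"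

lemma INV0: "INV [] []"
  unfolding INV_def folB_def by (auto intro: legal.intros)

lemma inv_A:
  assumes inv: "INV h I" and ev: "even (length h)"
  shows "INV (h @ [Inl y]) (stepL V E I (Inl y))"
proof (cases "ended V E I")
  case True
  then show ?thesis using inv unfolding INV_def by (auto simp: stepL_ended)
next
  case False
  from inv False have lg: "legal V E I" and fB: "folB \<tau> I" and sy: "length I = length h"
    and me: "ME h = ME I" and mv: "MV h \<inter> V \<subseteq> MV I"
    unfolding INV_def by auto
  have evI: "even (length I)" using ev sy by simp
  have ne: "V - MV I \<noteq> {}" using False evI unfolding ended_def by auto
  define z where "z = (if y \<in> V - MV I then y else SOME v. v \<in> V - MV I)"
  have "(SOME v. v \<in> V - MV I) \<in> V - MV I" using ne by (metis some_in_eq)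
  then have z: "z \<in> V - MV I" unfolding z_def by auto
  have st: "stepL V E I (Inl y) = I @ [Inl z]" unfolding stepL_def z_def using evI ne by simp
  have mv': "MV (h @ [Inl y]) \<inter> V \<subseteq> MV (I @ [Inl z])" using mv unfolding z_def by auto
  show ?thesis unfolding st INV_def
    using lg fB sy me mv' z evI by (auto simp: legal_snoc folB_snocA)
qed

lemma inv_B:
  assumes inv: "INV h I" and I: "I = trL V E h" and od: "odd (length h)" and e: "tB' h \<in> E' - ME h"
  shows "INV (h @ [Inr (tB' h)]) (stepL V E I (Inr (tB' h)))"
proof (cases "ended V E I")
  case True
  then show ?thesis using inv unfolding INV_def by (auto simp: stepL_ended)
next
  case False
  from inv False have lg: "legal V E I" and fB: "folB \<tau> I" and sy: "length I = length h"
    and me: "ME h = ME I" and mv: "MV h \<inter> V \<subseteq> MV I"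
    unfolding INV_def by auto
  have odI: "odd (length I)" using od sy by simp
  have ne: "E - ME I \<noteq> {}" using False odI unfolding ended_def by auto
  have tI: "\<tau> I \<in> E - ME I" using sB ne unfolding bob_strategy_def by blast
  have tb: "tB' h = \<tau> I" unfolding tB_def I[symmetric] Let_def using odI ne tI me by auto
  have st: "stepL V E I (Inr (\<tau> I)) = I @ [Inr (\<tau> I)]" unfolding stepL_def using odI tI by simp
  show ?thesis unfolding tb st INV_def
    using lg fB sy me mv tI odI by (auto simp: legal_snoc folB_snocB)
qed

lemma P_cases: "P (Suc t) = P t \<or> (\<not> ended V' E' (P t) \<and> P (Suc t) = P t @
     [if even (length (P t)) then Inl (\<sigma>' (P t)) else Inr (tB' (P t))])"
  unfolding P_def by (rule play_Suc_cases)

lemma P_snoc: "P (Suc t) = P t \<or> (\<exists>m. P (Suc t) = P t @ [m])"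
proof -
  from P_cases[of t] show ?thesis
  proof
    assume "P (Suc t) = P t" then show ?thesis by simp
  next
    assume a: "\<not> ended V' E' (P t) \<and> P (Suc t) = P t @
     [if even (length (P t)) then Inl (\<sigma>' (P t)) else Inr (tB' (P t))]"
    then show ?thesis by blast
  qed
qed

lemma P_next: "\<not> ended V' E' (P t) \<Longrightarrow> P (Suc t) = P t @
     [if even (length (P t)) then Inl (\<sigma>' (P t)) else Inr (tB' (P t))]"
  unfolding P_def by (simp add: Let_def)

lemma inv: "INV (P t) (Q t)"
proof (induction t)
  case 0 then show ?case by (simp add: P_def Q_def trL_def INV0)
next
  case (Suc t)
  from P_cases[of t] show ?case
  proof
    assume "P (Suc t) = P t" then show ?thesis using Suc by (simp add: Q_def)
  next
    assume a: "\<not> ended V' E' (P t) \<and> P (Suc t) = P t @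
     [if even (length (P t)) then Inl (\<sigma>' (P t)) else Inr (tB' (P t))]"
    show ?thesis
    proof (cases "even (length (P t))")
      case True
      then show ?thesis using inv_A[OF Suc True] a by (simp add: Q_def)
    next
      case False
      then have "E' - ME (P t) \<noteq> {}" using a unfolding ended_def by auto
      then have "tB' (P t) \<in> E' - ME (P t)" using tB_strat unfolding bob_strategy_def by blast
      then show ?thesis using inv_B[OF Suc _ False] a False by (simp add: Q_def)
    qed
  qed
qed

lemma chainQ: "prefix (Q t) (Q (Suc t))"
proof -
  from P_snoc[of t] show ?thesis
  proof
    assume "P (Suc t) = P t" then show ?thesis by (simp add: Q_def)
  next
    assume "\<exists>m. P (Suc t) = P t @ [m]"
    then obtain m where m: "P (Suc t) = P t @ [m]" by blast
    from stepL_cases[of V E "Q t" m] show ?thesis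
      unfolding Q_def m trL_snoc by auto
  qed
qed

lemma legQ: "legal V E (Q t)" and folQ: "folB \<tau> (Q t)"
  using inv[of t] unfolding INV_def by auto

lemma prog:
  assumes ne: "\<not> ended V E (Q t)"
  shows "\<exists>x. Q (Suc t) = Q t @ [x]"
proof -
  from inv[of t] ne have sy: "length (Q t) = length (P t)"
    and me: "ME (P t) = ME (Q t)" and mv: "MV (P t) \<inter> V \<subseteq> MV (Q t)"
    unfolding INV_def by auto
  have ne': "\<not> ended V' E' (P t)"
  proof
    assume en: "ended V' E' (P t)"
    show False
    proof (cases "even (length (P t))")
      case True
      then have "V' \<subseteq> MV (P t)" using en unfolding ended_def by auto
      then have "V \<subseteq> MV (Q t)" using mv VV' by auto
      then show False using ne True sy unfolding ended_def by auto
    next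
      case False
      then have "E' \<subseteq> ME (P t)" using en unfolding ended_def by auto
      then have "E \<subseteq> ME (Q t)" using me EE' by auto
      then show False using ne False sy unfolding ended_def by auto
    qed
  qed
  then have a: "P (Suc t) = P t @ [if even (length (P t)) then Inl (\<sigma>' (P t)) else Inr (tB' (P t))]"
    by (rule P_next)
  show ?thesis
  proof (cases "even (length (P t))")
    case True
    then have "V - MV (Q t) \<noteq> {}" "even (length (Q t))" using ne sy unfolding ended_def by auto
    then show ?thesis using a True unfolding Q_def by (simp add: stepL_def)
  next
    case False
    then have odI: "odd (length (Q t))" and n2: "E - ME (Q t) \<noteq> {}" using ne sy unfolding ended_def by auto
    have tI: "\<tau> (Q t) \<in> E - ME (Q t)" using sB n2 unfolding bob_strategy_def by blast
    have tb: "tB' (P t) = \<tau> (Q t)" unfolding tB_def Q_def[symmetric] Let_def using odI n2 tI me by auto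
    show ?thesis using a False tb odI tI unfolding Q_def[symmetric] by (simp add: stepL_def Q_def)
  qed
qed

lemma sync_ex: "\<exists>t'. Q t' = Q t \<and> length (Q t') = length (P t')"
proof (induction t)
  case 0 then show ?case by (intro exI[of _ 0]) (simp add: Q_def P_def trL_def)
next
  case (Suc t)
  show ?case
  proof (cases "Q (Suc t) = Q t")
    case True then show ?thesis using Suc by metis
  next
    case False
    from P_snoc[of t] obtain m where Pm: "P (Suc t) = P t @ [m]"
      using False unfolding Q_def by auto
    then have ch: "stepL V E (Q t) m \<noteq> Q t" using False unfolding Q_def by simp
    then have "\<not> ended V E (Q t)" using stepL_ended by metis
    then have sy: "length (Q t) = length (P t)" using inv[of t] unfolding INV_def by auto
    obtain x where "stepL V E (Q t) m = Q t @ [x]" using stepL_cases ch by metis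
    then have "length (Q (Suc t)) = length (P (Suc t))" using sy Pm unfolding Q_def by simp
    then show ?thesis by blast
  qed
qed

lemma lower_main:
  assumes s: "0 < s" and w: "\<forall>\<sigma>. alice_strategy V \<sigma> \<longrightarrow> enat s \<le> final_score V E \<sigma> \<tau>"
  shows "enat s \<le> final_score V' E' \<sigma>' tB'"
proof -
  define \<sigma>Q where "\<sigma>Q = chA Q V"
  have as: "alice_strategy V \<sigma>Q" unfolding \<sigma>Q_def using chA_strat[of Q, OF chainQ legQ] .
  then have "enat s \<le> (SUP r. pscore V (play V E \<sigma>Q \<tau> (2 * r)))" using w unfolding final_score_def by blast
  then obtain r where r: "enat s \<le> pscore V (play V E \<sigma>Q \<tau> (2 * r))" using sup_ge_enat s by blast
  have "\<exists>t. play V E \<sigma>Q \<tau> (2 * r) = Q t"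
  proof (rule play_chain[where V=V and E=E and Q=Q and \<sigma>=\<sigma>Q and \<tau>=\<tau>])
    show "Q 0 = []" by (simp add: Q_def P_def trL_def)
    show "\<And>t. legal V E (Q t)" by (rule legQ)
    show "\<And>t. folA \<sigma>Q (Q t)" unfolding \<sigma>Q_def by (rule chA_fol[of Q, OF chainQ])
    show "\<And>t. folB \<tau> (Q t)" by (rule folQ)
    show "\<And>t. \<not> ended V E (Q t) \<Longrightarrow> \<exists>x. Q (Suc t) = Q t @ [x]" by (rule prog)
  qed
  then obtain t where t: "play V E \<sigma>Q \<tau> (2 * r) = Q t" by blast
  obtain v where v: "v \<in> V" "enat s \<le> enat (vscore (Q t) v)"
    using sup_ge_enat[OF r[unfolded t pscore_def] s] by blast
  obtain t' where t': "Q t' = Q t" "length (Q t') = length (P t')" using sync_ex by blast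
  then have me: "ME (P t') = ME (Q t')" and mv: "MV (P t') \<inter> V \<subseteq> MV (Q t')"
    using inv[of t'] unfolding INV_def by auto
  have "v \<notin> MV (Q t')" using v s t' unfolding vscore_def by auto
  then have "vscore (P t') v = vscore (Q t') v" using mv me v unfolding vscore_def by auto
  then have "enat s \<le> pscore V' (P t')" unfolding pscore_def
    using v t' VV' by (intro SUP_upper2[of v]) auto
  moreover obtain r' where "pscore V' (P t') \<le> pscore V' (P (2 * r'))"
    unfolding P_def using pscore_play_even by blast
  moreover have "pscore V' (P (2 * r')) \<le> final_score V' E' \<sigma>' tB'"
    unfolding final_score_def P_def by (rule SUP_upper) simp
  ultimately show ?thesis by (meson order_trans)
qed

end

lemma bob_wins_0: "bob_wins V E 0"
proof -
  define \<tau> where "\<tau> h = (SOME e. e \<in> E - ME h)" for h :: "'a hist"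
  have "bob_strategy E \<tau>" unfolding bob_strategy_def \<tau>_def
  proof (intro allI impI)
    fix h :: "'a hist" assume "E - ME h \<noteq> {}"
    then show "(SOME e. e \<in> E - ME h) \<in> E - ME h" by (metis some_in_eq)
  qed
  moreover have "\<forall>\<sigma>. alice_strategy V \<sigma> \<longrightarrow> enat 0 \<le> final_score V E \<sigma> \<tau>"
    by (simp add: zero_enat_def[symmetric])
  ultimately show ?thesis unfolding bob_wins_def by blast
qed

lemma lower_thm:
  assumes "induced_subgraph V E V' E'" "bob_wins V E s"
  shows "bob_wins V' E' s"
proof (cases "s = 0")
  case True then show ?thesis using bob_wins_0 by simp
next
  case False
  from assms(2) obtain \<tau> where b: "bob_strategy E \<tau>"
    and w: "\<forall>\<sigma>. alice_strategy V \<sigma> \<longrightarrow> enat s \<le> final_score V E \<sigma> \<tau>"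
    unfolding bob_wins_def by blast
  have "bob_strategy E' (tB V E E' \<tau>) \<and> (\<forall>\<sigma>'. alice_strategy V' \<sigma>' \<longrightarrow> enat s \<le> final_score V' E' \<sigma>' (tB V E E' \<tau>))"
  proof (intro conjI allI impI)
    fix \<sigma>' :: "'a hist \<Rightarrow> 'a" assume "alice_strategy V' \<sigma>'"
    then interpret lower V E V' E' \<tau> \<sigma>' using assms(1) b by unfold_locales
    show "enat s \<le> final_score V' E' \<sigma>' (tB V E E' \<tau>)" using lower_main False w by simp
  next
    define \<sigma>' :: "'a hist \<Rightarrow> 'a" where "\<sigma>' h = (SOME v. v \<in> V' - MV h)" for h
    have "alice_strategy V' \<sigma>'" unfolding alice_strategy_def \<sigma>'_def
    proof (intro allI impI)
      fix h :: "'a hist" assume "V' - MV h \<noteq> {}"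
      then show "(SOME v. v \<in> V' - MV h) \<in> V' - MV h" by (metis some_in_eq)
    qed
    then interpret lower V E V' E' \<tau> \<sigma>' using assms(1) b by unfold_locales
    show "bob_strategy E' (tB V E E' \<tau>)" by (rule tB_strat)
  qed
  then show ?thesis unfolding bob_wins_def by blast
qed


lemma bob_wins_mono: "bob_wins V E s \<Longrightarrow> s' \<le> s \<Longrightarrow> bob_wins V E s'"
  unfolding bob_wins_def by (meson enat_ord_simps(1) order_trans)

theorem theorem4p3:
  fixes V V' :: "'a set" and E E' :: "'a set set" and n :: nat
  assumes "graph V' E'"
    and "induced_subgraph V E V' E'"
    and "\<forall>v \<in> V' - V. degree E' v < enat n"
    and "col_ve V E = enat n"
    and "alice_avoids V E (n - 1)"
  shows "col_ve V' E' = enat n"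
proof -
  define S where "S = {enat s | s. bob_wins V E s}"
  have cS: "Sup S + 1 = enat n" using assms(4) unfolding col_ve_def S_def by simp
  have fin: "Sup S \<noteq> \<infinity>"
  proof
    assume "Sup S = \<infinity>" then show False using cS by simp
  qed
  then obtain m where m: "Sup S = enat m" by (cases "Sup S") auto
  have n: "n = Suc m" using cS m by (simp add: one_enat_def)
  have S0: "enat 0 \<in> S" unfolding S_def using bob_wins_0 by blast
  then have Sne: "S \<noteq> {}" by blast
  have finS: "finite S" using m Sne fin unfolding Sup_enat_def by (auto split: if_splits)
  then have "Max S = enat m" using m Sne unfolding Sup_enat_def by simp
  then have "enat m \<in> S" using Max_in[OF finS Sne] by simp
  then have bm: "bob_wins V E m" unfolding S_def by auto
  have bm': "bob_wins V' E' m" using lower_thm[OF assms(2) bm] .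
  have nb: "\<not> bob_wins V' E' n" using upper_thm[OF assms(1-3) assms(5)] n by simp
  define S' where "S' = {enat s | s. bob_wins V' E' s}"
  have "Sup S' = enat m"
  proof (rule antisym)
    show "Sup S' \<le> enat m"
    proof (rule Sup_least)
      fix x assume "x \<in> S'"
      then obtain s where s: "x = enat s" "bob_wins V' E' s" unfolding S'_def by blast
      have "s \<le> m"
      proof (rule ccontr)
        assume "\<not> s \<le> m"
        then have "n \<le> s" using n by simp
        then show False using bob_wins_mono[OF s(2)] nb by blast
      qed
      then show "x \<le> enat m" using s by simp
    qed
    show "enat m \<le> Sup S'" using bm' unfolding S'_def by (intro Sup_upper) blast
  qed
  then show ?thesis unfolding col_ve_def S'_def[symmetric] using n by (simp add: one_enat_def)
qed

end
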